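(* Let $h \ge 1$, $N_H \ge 1$, $f \ge 1$ be integers and let $R \in (0,1]$. Let the state matrix $(\mathbf{F}_1, \ldots, \mathbf{F}_h)$ of an IBF with $h$ hash functions, $N = h N_H$ cells and $f$ stored elements be chosen uniformly at random from $\mathcal{S}_{N_H,f}^h$, and let $Y$ be the number of elements extracted by the extraction process. Then the probability that the extraction fails to achieve extraction rate $R$, i.e. $\Pr(Y/f < R)$, satisfies $$\Pr\left(\frac{Y}{f} < R\right) \le 1 - \sum_{e = \lceil R f \rceil}^{f} \frac{\Theta(N_H, f, h, e)}{N_H^{h f}}.$$ Equivalently, for every integer $0 \le y \le f$, $\Pr(Y \ge y) \ge \sum_{e=y}^{f} \Theta(N_H, f, h, e)/N_H^{hf}$.
   Context: For integers $n, m \ge 0$, let $\mathcal{S}_{n,m}$ denote the set of all $n \times m$ binary matrices in which every column has Hamming weight exactly one (so $|\mathcal{S}_{n,m}| = n^m$; $\mathcal{S}_{n,0}$ consists of the single empty matrix, and $\mathcal{S}_{0,m} = \emptyset$ for $m \ge 1$). A binary matrix is called a stopping matrix if none of its rows has Hamming weight exactly one. Let $z(n, m)$ denote the number of matrices in $\mathcal{S}_{n,m}$ that are stopping matrices. The state matrix of an IBF with $h$ hash functions, $N = hN_H$ cells (partitioned into $h$ sub-filters of $N_H$ cells, the $i$-th hash function mapping into the $i$-th sub-filter) and $f$ inserted elements $x_1,\dots,x_f$ is the $h$-tuple $(\mathbf{F}_1,\dots,\mathbf{F}_h)$ with $\mathbf{F}_i \in \mathcal{S}_{N_H,f}$, where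 $\mathbf{F}_i$ has a $1$ in row $r$, column $j$ iff the $i$-th hash function maps $x_j$ to cell $r$ of the $i$-th sub-filter. Extraction (peeling) process: columns are removed simultaneously from all blocks; while there is some $i \in [h]$ and some row of $\mathbf{F}_i$ whose restriction to the not-yet-removed columns has Hamming weight exactly one, remove (extract) the column containing that unique $1$; stop when no block has such a row. The number of extracted elements is the number of removed columns (independent of the order of removals). For $e \in \mathbb{N}$, $\mathcal{T}_e$ is the set of vectors $\mathbf{b} \in \mathbb{N}^h$ with all entries in $\{0, \ldots, e\}$, and $\xi(\mathbf{b}) = \sum_i b_i$. The function $\Psi$ is defined by $\Psi(0, \mathbf{0}) = 1$, $\Psi(0, \mathbf{b}) = 0$ for $\mathbf{b} \ne \mathbf{0}$, and for $e \ge 1$: $\Psi(e, \mathbf{b}) = \prod_{i=1}^{h} \binom{e}{b_i} - \sum_{j=0}^{e-1} \binom{e}{j} \Psi(j, \mathbf{b})$. Finally $$\Theta(N_H, f, h, e) = \binom{f}{e} \sum_{\mathbf{b} \in \mathcal{T}_e \,:\, \xi(\mathbf{b}) \ge e} \left( \Psi(e, \mathbf{b}) \prod_{i=1}^{h} \left[ \binom{N_H}{b_i}\, b_i!\, z(N_H - b_i, f - b_i) \right] \right).$$ *)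

theory Defs
  imports "HOL-Probability.Probability"
begin

text \<open>Binary matrices are represented as predicates M r c (row r, column c).\<close>

definition S_mat :: "nat \<Rightarrow> nat \<Rightarrow> (nat \<Rightarrow> nat \<Rightarrow> bool) set" where
  "S_mat n m = {M. (\<forall>r c. M r c \<longrightarrow> r < n \<and> c < m) \<and> (\<forall>c<m. card {r. M r c} = 1)}"

definition stopping_matrix :: "nat \<Rightarrow> (nat \<Rightarrow> nat \<Rightarrow> bool) \<Rightarrow> bool" where
  "stopping_matrix n M \<longleftrightarrow> (\<forall>r<n. card {c. M r c} \<noteq> 1)"

definition z_count :: "nat \<Rightarrow> nat \<Rightarrow> nat" where
  "z_count n m = card {M \<in> S_mat n m. stopping_matrix n M}"

definition ibf_states :: "nat \<Rightarrow> nat \<Rightarrow> nat \<Rightarrow> (nat \<Rightarrow> nat \<Rightarrow> nat \<Rightarrow> bool) set" where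
  "ibf_states h NH f = {F. (\<forall>i<h. F i \<in> S_mat NH f) \<and> (\<forall>i\<ge>h. F i = (\<lambda>_ _. False))}"

text \<open>One peeling step: K is the set of not-yet-removed columns; if some row of some block
  restricted to K has weight exactly one, the column holding that 1 is removed.\<close>

definition peel_step :: "nat \<Rightarrow> nat \<Rightarrow> (nat \<Rightarrow> nat \<Rightarrow> nat \<Rightarrow> bool) \<Rightarrow> nat set \<Rightarrow> nat set \<Rightarrow> bool" where
  "peel_step h NH F K K' \<longleftrightarrow>
     (\<exists>i<h. \<exists>r<NH. \<exists>c. {c' \<in> K. F i r c'} = {c} \<and> K' = K - {c})"

definition peel_terminal :: "nat \<Rightarrow> nat \<Rightarrow> (nat \<Rightarrow> nat \<Rightarrow> nat \<Rightarrow> bool) \<Rightarrow> nat set \<Rightarrow> bool" where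
  "peel_terminal h NH F K \<longleftrightarrow> \<not> (\<exists>K'. peel_step h NH F K K')"

text \<open>Final set of remaining columns of (some) run of the extraction process
  (the result is independent of the order of removals).\<close>

definition peel_final :: "nat \<Rightarrow> nat \<Rightarrow> nat \<Rightarrow> (nat \<Rightarrow> nat \<Rightarrow> nat \<Rightarrow> bool) \<Rightarrow> nat set" where
  "peel_final h NH f F = (SOME K. (peel_step h NH F)\<^sup>*\<^sup>* {0..<f} K \<and> peel_terminal h NH F K)"

definition extracted :: "nat \<Rightarrow> nat \<Rightarrow> nat \<Rightarrow> (nat \<Rightarrow> nat \<Rightarrow> nat \<Rightarrow> bool) \<Rightarrow> nat" where
  "extracted h NH f F = card ({0..<f} - peel_final h NH f F)"

text \<open>\<Psi>(e, b) for b \<in> \<nat>^h represented as a function nat \<Rightarrow> nat (only indices < h matter).\<close>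

fun Psi :: "nat \<Rightarrow> nat \<Rightarrow> (nat \<Rightarrow> nat) \<Rightarrow> int" where
  "Psi h e b =
     (if e = 0 then (if (\<forall>i<h. b i = 0) then 1 else 0)
      else (\<Prod>i<h. int (e choose b i)) - (\<Sum>j<e. int (e choose j) * Psi h j b))"

declare Psi.simps[simp del]

definition T_set :: "nat \<Rightarrow> nat \<Rightarrow> (nat \<Rightarrow> nat) set" where
  "T_set h e = PiE {..<h} (\<lambda>_. {0..e})"

definition xi :: "nat \<Rightarrow> (nat \<Rightarrow> nat) \<Rightarrow> nat" where
  "xi h b = (\<Sum>i<h. b i)"

definition Theta :: "nat \<Rightarrow> nat \<Rightarrow> nat \<Rightarrow> nat \<Rightarrow> int" where
  "Theta NH f h e = int (f choose e) *
     (\<Sum>b \<in> {b \<in> T_set h e. xi h b \<ge> e}.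
        Psi h e b * (\<Prod>i<h. int ((NH choose b i) * fact (b i) * z_count (NH - b i) (f - b i))))"

end

theory Submission
  imports Defs
begin


definition mat :: "nat \<Rightarrow> (nat \<Rightarrow> nat) \<Rightarrow> nat \<Rightarrow> nat \<Rightarrow> bool" where
  "mat m \<phi> = (\<lambda>r c. c < m \<and> \<phi> c = r)"

lemma mat_in_S: "\<phi> \<in> {0..<m} \<rightarrow>\<^sub>E {0..<n} \<Longrightarrow> mat m \<phi> \<in> S_mat n m"
proof -
  assume a: "\<phi> \<in> {0..<m} \<rightarrow>\<^sub>E {0..<n}"
  have "{r. mat m \<phi> r c} = {\<phi> c}" if "c < m" for c using that by (auto simp: mat_def)
  then show ?thesis using a by (auto simp: S_mat_def mat_def)
qed

lemma mat_inj: "inj_on (mat m) ({0..<m} \<rightarrow>\<^sub>E {0..<n})"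
proof (rule inj_onI)
  fix \<phi> \<psi> assume a: "\<phi> \<in> {0..<m} \<rightarrow>\<^sub>E {0..<n}" "\<psi> \<in> {0..<m} \<rightarrow>\<^sub>E {0..<n}" "mat m \<phi> = mat m \<psi>"
  have e: "\<phi> \<in> extensional {0..<m}" "\<psi> \<in> extensional {0..<m}" using a(1,2) by (auto simp: PiE_iff)
  show "\<phi> = \<psi>"
  proof (rule extensionalityI[OF e])
    fix c assume "c \<in> {0..<m}"
    then have "mat m \<phi> (\<phi> c) c" by (simp add: mat_def)
    then have "mat m \<psi> (\<phi> c) c" using a(3) by simp
    then show "\<phi> c = \<psi> c" by (simp add: mat_def)
  qed
qed

lemma mat_surj: "M \<in> S_mat n m \<Longrightarrow> \<exists>\<phi>\<in>{0..<m} \<rightarrow>\<^sub>E {0..<n}. M = mat m \<phi>"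
proof -
  assume M: "M \<in> S_mat n m"
  have ex: "\<exists>!r. M r c" if "c < m" for c
  proof -
    have "card {r. M r c} = 1" using M that by (simp add: S_mat_def)
    then obtain r where "{r. M r c} = {r}" by (auto simp: card_1_singleton_iff)
    then show ?thesis by (metis mem_Collect_eq singletonD singletonI)
  qed
  define \<phi> where "\<phi> = (\<lambda>c\<in>{0..<m}. THE r. M r c)"
  have Mphi: "M (\<phi> c) c" if "c < m" for c using theI'[OF ex[OF that]] that by (simp add: \<phi>_def)
  have lt: "\<phi> c < n" if "c<m" for c using Mphi[OF that] M by (auto simp: S_mat_def)
  have "\<phi> \<in> extensional {0..<m}" by (simp add: \<phi>_def)
  then have "\<phi> \<in> {0..<m} \<rightarrow>\<^sub>E {0..<n}" using lt by (auto simp: PiE_iff)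
  moreover have "M = mat m \<phi>"
  proof (intro ext)
    fix r c show "M r c = mat m \<phi> r c"
    proof
      assume "M r c"
      then have "c < m" using M by (auto simp: S_mat_def)
      then show "mat m \<phi> r c" using ex[OF \<open>c<m\<close>] Mphi[OF \<open>c<m\<close>] \<open>M r c\<close> by (auto simp: mat_def)
    next
      assume "mat m \<phi> r c" then show "M r c" using Mphi by (auto simp: mat_def)
    qed
  qed
  ultimately show ?thesis by blast
qed

lemma mat_bij: "bij_betw (mat m) ({0..<m} \<rightarrow>\<^sub>E {0..<n}) (S_mat n m)"
proof -
  have "mat m ` ({0..<m} \<rightarrow>\<^sub>E {0..<n}) \<subseteq> S_mat n m" using mat_in_S by blast
  moreover have "S_mat n m \<subseteq> mat m ` ({0..<m} \<rightarrow>\<^sub>E {0..<n})"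
  proof
    fix M assume "M \<in> S_mat n m"
    then obtain \<phi> where "\<phi>\<in>{0..<m} \<rightarrow>\<^sub>E {0..<n}" "M = mat m \<phi>" using mat_surj by blast
    then show "M \<in> mat m ` ({0..<m} \<rightarrow>\<^sub>E {0..<n})" by blast
  qed
  ultimately show ?thesis unfolding bij_betw_def using mat_inj by blast
qed

lemma bij_filter: "bij_betw f A B \<Longrightarrow> bij_betw f {x\<in>A. P (f x)} {y\<in>B. P y}"
proof -
  assume b: "bij_betw f A B"
  have "f ` {x\<in>A. P (f x)} = {y\<in>B. P y}"
  proof
    show "f ` {x\<in>A. P (f x)} \<subseteq> {y\<in>B. P y}" using bij_betw_imp_surj_on[OF b] by blast
    show "{y\<in>B. P y} \<subseteq> f ` {x\<in>A. P (f x)}"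
    proof
      fix y assume y: "y \<in> {y\<in>B. P y}"
      then obtain x where "x \<in> A" "y = f x" using bij_betw_imp_surj_on[OF b] by (metis (no_types, lifting) imageE mem_Collect_eq)
      then show "y \<in> f ` {x\<in>A. P (f x)}" using y by blast
    qed
  qed
  then show ?thesis using bij_betw_subset[OF b, of "{x\<in>A. P (f x)}" "{y\<in>B. P y}"] by blast
qed

lemma card_S_mat_filter:
  "card {M \<in> S_mat n m. P M} = card {\<phi> \<in> {0..<m} \<rightarrow>\<^sub>E {0..<n}. P (mat m \<phi>)}"
  using bij_betw_same_card[OF bij_filter[OF mat_bij, of m n P]] by simp

lemma finite_S_mat: "finite (S_mat n m)"
  using bij_betw_finite[OF mat_bij] by (auto intro: finite_PiE)

lemma card_S_mat: "card (S_mat n m) = n ^ m"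
  using bij_betw_same_card[OF mat_bij, of m n] by (simp add: card_funcsetE)

definition nosing :: "'a set \<Rightarrow> 'b set \<Rightarrow> ('a \<Rightarrow> 'b) set" where
  "nosing A B = {\<phi> \<in> A \<rightarrow>\<^sub>E B. \<forall>r\<in>B. card {c\<in>A. \<phi> c = r} \<noteq> 1}"

lemma z_count_nosing: "z_count n m = card (nosing {0..<m} {0..<n})"
proof -
  have "stopping_matrix n (mat m \<phi>) \<longleftrightarrow> (\<forall>r\<in>{0..<n}. card {c\<in>{0..<m}. \<phi> c = r} \<noteq> 1)" for \<phi>
  proof -
    have "{c. mat m \<phi> r c} = {c\<in>{0..<m}. \<phi> c = r}" for r by (auto simp: mat_def)
    then show ?thesis by (auto simp: stopping_matrix_def)
  qed
  then show ?thesis unfolding z_count_def card_S_mat_filter nosing_def by simp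
qed



lemma choose_Suc_mult: "(n choose Suc k) * Suc k = (n choose k) * (n - k)"
  by (metis binomial_absorb_comp binomial_absorption mult.commute)

lemma prod_minus_choose: "(\<Prod>i\<in>{0..<k}. (n::nat) - i) = (n choose k) * fact k"
proof (induction k)
  case 0 then show ?case by simp
next
  case (Suc k)
  have "(\<Prod>i\<in>{0..<Suc k}. n - i) = (n choose k) * fact k * (n - k)" using Suc by simp
  also have "\<dots> = ((n choose Suc k) * Suc k) * fact k"
    unfolding choose_Suc_mult by (simp only: ac_simps)
  also have "\<dots> = (n choose Suc k) * fact (Suc k)"
    by (simp only: fact_Suc ac_simps of_nat_id)
  finally show ?case .
qed

lemma card_inj_funcset: "finite S \<Longrightarrow> finite B \<Longrightarrow>
  card {\<psi> \<in> S \<rightarrow>\<^sub>E B. inj_on \<psi> S} = (card B choose card S) * fact (card S)"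
  using card_inj_on_subset_funcset[of S B S] prod_minus_choose by simp

lemma nosing_le:
  assumes fin: "finite A'" "finite B'" and a: "bij_betw \<alpha> A' A" and b: "bij_betw \<beta> B B'"
  shows "card (nosing A B) \<le> card (nosing A' B')"
proof -
  define T where "T = (\<lambda>\<phi>. restrict (\<beta> \<circ> \<phi> \<circ> \<alpha>) A')"
  have aA: "\<alpha> c \<in> A" if "c \<in> A'" for c using a that by (auto simp: bij_betw_def)
  have bB: "\<beta> r \<in> B'" if "r \<in> B" for r using b that by (auto simp: bij_betw_def)
  have binj: "inj_on \<beta> B" using b by (auto simp: bij_betw_def)
  have ainj: "inj_on \<alpha> A'" using a by (auto simp: bij_betw_def)
  have aim: "\<alpha> ` A' = A" using a by (auto simp: bij_betw_def)
  have bim: "\<beta> ` B = B'" using b by (auto simp: bij_betw_def)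
  have "inj_on T (nosing A B)"
  proof (rule inj_onI)
    fix \<phi> \<psi> assume p: "\<phi> \<in> nosing A B" "\<psi> \<in> nosing A B" "T \<phi> = T \<psi>"
    have e: "\<phi> \<in> extensional A" "\<psi> \<in> extensional A" using p(1,2) by (auto simp: nosing_def PiE_iff)
    show "\<phi> = \<psi>"
    proof (rule extensionalityI[OF e])
      fix x assume "x \<in> A"
      then obtain c where c: "c \<in> A'" "x = \<alpha> c" using aim by blast
      have "T \<phi> c = T \<psi> c" using p(3) by simp
      then have "\<beta> (\<phi> x) = \<beta> (\<psi> x)" using c by (simp add: T_def)
      moreover have "\<phi> x \<in> B" "\<psi> x \<in> B" using p(1,2) \<open>x\<in>A\<close> by (auto simp: nosing_def)
      ultimately show "\<phi> x = \<psi> x" using binj by (auto dest: inj_onD)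
    qed
  qed
  moreover have "T ` nosing A B \<subseteq> nosing A' B'"
  proof
    fix g assume "g \<in> T ` nosing A B"
    then obtain \<phi> where \<phi>: "\<phi> \<in> nosing A B" "g = T \<phi>" by blast
    have \<phi>B: "\<phi> x \<in> B" if "x \<in> A" for x using \<phi>(1) that by (auto simp: nosing_def)
    have "g \<in> A' \<rightarrow>\<^sub>E B'" using \<phi>(2) \<phi>B aA bB by (auto simp: T_def)
    moreover have "card {c\<in>A'. g c = r'} \<noteq> 1" if r': "r' \<in> B'" for r'
    proof -
      obtain r where r: "r \<in> B" "r' = \<beta> r" using r' bim by blast
      have "{c\<in>A'. g c = r'} = {c\<in>A'. \<phi> (\<alpha> c) = r}"
        using r \<phi>(2) \<phi>B aA binj by (auto simp: T_def dest: inj_onD)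
      moreover have "\<alpha> ` {c\<in>A'. \<phi> (\<alpha> c) = r} = {x\<in>A. \<phi> x = r}" using aim by auto
      moreover have "inj_on \<alpha> {c\<in>A'. \<phi> (\<alpha> c) = r}" using ainj by (rule inj_on_subset) auto
      ultimately have "card {c\<in>A'. g c = r'} = card {x\<in>A. \<phi> x = r}" by (metis card_image)
      then show ?thesis using \<phi>(1) r(1) by (simp add: nosing_def)
    qed
    ultimately show "g \<in> nosing A' B'" by (simp add: nosing_def)
  qed
  moreover have "finite (nosing A' B')" using fin
    by (rule finite_subset[rotated, OF finite_PiE]) (auto simp: nosing_def)
  ultimately show ?thesis by (rule card_inj_on_le)
qed

lemma nosing_card_eq:
  assumes "finite A" "finite A'" "finite B" "finite B'" "card A = card A'" "card B = card B'"
  shows "card (nosing A B) = card (nosing A' B')"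
proof -
  obtain \<alpha> where a: "bij_betw \<alpha> A' A" using finite_same_card_bij assms by metis
  obtain \<alpha>' where a': "bij_betw \<alpha>' A A'" using finite_same_card_bij assms by metis
  obtain \<beta> where b: "bij_betw \<beta> B B'" using finite_same_card_bij assms by metis
  obtain \<beta>' where b': "bij_betw \<beta>' B' B" using finite_same_card_bij assms by metis
  show ?thesis using nosing_le[OF _ _ a b] nosing_le[OF _ _ a' b'] assms by (meson le_antisym)
qed



definition single :: "'a set \<Rightarrow> ('a \<Rightarrow> 'b) \<Rightarrow> 'a set" where
  "single A \<phi> = {c\<in>A. \<forall>c'\<in>A. \<phi> c' = \<phi> c \<longrightarrow> c' = c}"

definition merge :: "'a set \<Rightarrow> ('a \<Rightarrow> 'b) \<Rightarrow> ('a \<Rightarrow> 'b) \<Rightarrow> 'a \<Rightarrow> 'b" where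
  "merge S \<psi> g = (\<lambda>c. if c \<in> S then \<psi> c else g c)"

lemma card_single:
  fixes A S :: "'a set" and B :: "'b set"
  assumes fA: "finite A" and fB: "finite B" and SA: "S \<subseteq> A"
  shows "card {\<phi> \<in> A \<rightarrow>\<^sub>E B. single A \<phi> = S} =
         card {\<psi> \<in> S \<rightarrow>\<^sub>E B. inj_on \<psi> S} * card (nosing (A - S) {0..<card B - card S})"
proof -
  define I where "I = {\<psi> \<in> S \<rightarrow>\<^sub>E B. inj_on \<psi> S}"
  define N where "N = (\<lambda>\<psi>. nosing (A - S) (B - \<psi> ` S))"
  define X where "X = {\<phi> \<in> A \<rightarrow>\<^sub>E B. single A \<phi> = S}"
  define M where "M = (\<lambda>(\<psi>::'a\<Rightarrow>'b, g). merge S \<psi> g)"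
  have fS: "finite S" using fA SA by (rule rev_finite_subset)
  have fI: "finite I" unfolding I_def using fS fB by (rule finite_subset[rotated, OF finite_PiE]) auto
  have fN: "finite (N \<psi>)" for \<psi> unfolding N_def
    by (rule finite_subset[of _ "(A - S) \<rightarrow>\<^sub>E (B - \<psi> ` S)"]) (auto simp: nosing_def intro!: finite_PiE fA fB)
  have cN: "card (N \<psi>) = card (nosing (A - S) {0..<card B - card S})" if "\<psi> \<in> I" for \<psi>
  proof -
    have "\<psi> ` S \<subseteq> B" "inj_on \<psi> S" using that by (auto simp: I_def)
    then have "card (B - \<psi> ` S) = card B - card S"
      using card_Diff_subset[of "\<psi> ` S" B] finite_subset[of "\<psi> ` S" B] fB card_image[of \<psi> S] by simp
    then show ?thesis unfolding N_def using fA fB by (intro nosing_card_eq) auto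
  qed
  have inj: "inj_on M (Sigma I N)"
  proof (rule inj_onI)
    fix p q assume p: "p \<in> Sigma I N" and q: "q \<in> Sigma I N" and e: "M p = M q"
    obtain \<psi> g where pp: "p = (\<psi>, g)" "\<psi> \<in> I" "g \<in> N \<psi>" using p by auto
    obtain \<psi>' g' where qq: "q = (\<psi>', g')" "\<psi>' \<in> I" "g' \<in> N \<psi>'" using q by auto
    have e': "merge S \<psi> g c = merge S \<psi>' g' c" for c using e pp qq by (simp add: M_def)
    have "\<psi> = \<psi>'"
    proof (rule extensionalityI)
      show "\<psi> \<in> extensional S" "\<psi>' \<in> extensional S" using pp qq by (auto simp: I_def PiE_iff)
      fix c assume "c \<in> S" then show "\<psi> c = \<psi>' c" using e'[of c] by (simp add: merge_def)
    qed
    moreover have "g = g'"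
    proof (rule extensionalityI)
      show "g \<in> extensional (A - S)" "g' \<in> extensional (A - S)" using pp qq by (auto simp: N_def nosing_def PiE_iff)
      fix c assume "c \<in> A - S" then show "g c = g' c" using e'[of c] by (simp add: merge_def)
    qed
    ultimately show "p = q" using pp qq by simp
  qed
  have img: "M ` Sigma I N = X"
  proof
    show "M ` Sigma I N \<subseteq> X"
    proof
      fix \<phi> assume "\<phi> \<in> M ` Sigma I N"
      then obtain \<psi> g where pg: "\<psi> \<in> I" "g \<in> N \<psi>" "\<phi> = merge S \<psi> g" by (auto simp: M_def)
      have \<psi>B: "\<psi> c \<in> B" if "c \<in> S" for c using pg(1) that by (auto simp: I_def)
      have \<psi>inj: "inj_on \<psi> S" using pg(1) by (auto simp: I_def)
      have gB: "g c \<in> B - \<psi> ` S" if "c \<in> A - S" for c using pg(2) that by (auto simp: N_def nosing_def)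
      have gext: "g c = undefined" if "c \<notin> A - S" for c using pg(2) that by (auto simp: N_def nosing_def PiE_iff extensional_def)
      have \<psi>ext: "\<psi> c = undefined" if "c \<notin> S" for c using pg(1) that by (auto simp: I_def PiE_iff extensional_def)
      have gnos: "card {c\<in>A - S. g c = r} \<noteq> 1" if "r \<in> B - \<psi> ` S" for r using pg(2) that by (auto simp: N_def nosing_def)
      have "\<phi> \<in> A \<rightarrow>\<^sub>E B"
        using \<psi>B gB gext SA unfolding pg(3) merge_def by (auto simp: PiE_iff extensional_def)
      moreover have "single A \<phi> = S"
      proof
        show "S \<subseteq> single A \<phi>"
        proof
          fix c assume c: "c \<in> S"
          have "c' = c" if "c' \<in> A" "\<phi> c' = \<phi> c" for c'
          proof (cases "c' \<in> S")
            case True then show ?thesis using that c \<psi>inj by (auto simp: pg(3) merge_def dest: inj_onD)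
          next
            case False then have "g c' \<in> B - \<psi> ` S" using gB that by auto
            moreover have "g c' = \<psi> c" using that c False by (simp add: pg(3) merge_def)
            ultimately show ?thesis using c by auto
          qed
          then show "c \<in> single A \<phi>" using c SA by (auto simp: single_def)
        qed
        show "single A \<phi> \<subseteq> S"
        proof
          fix c assume c: "c \<in> single A \<phi>"
          show "c \<in> S"
          proof (rule ccontr)
            assume "c \<notin> S"
            then have cAS: "c \<in> A - S" using c by (auto simp: single_def)
            have "{x\<in>A - S. g x = g c} = {c}"
            proof (intro equalityI subsetI)
              fix x assume x: "x \<in> {x\<in>A - S. g x = g c}"
              then have "\<phi> x = \<phi> c" using cAS by (simp add: pg(3) merge_def)
              then show "x \<in> {c}" using c x by (auto simp: single_def)
            qed (use cAS in auto)
            then show False using gnos[OF gB[OF cAS]] by simp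
          qed
        qed
      qed
      ultimately show "\<phi> \<in> X" by (simp add: X_def)
    qed
    show "X \<subseteq> M ` Sigma I N"
    proof
      fix \<phi> assume "\<phi> \<in> X"
      then have \<phi>: "\<phi> \<in> A \<rightarrow>\<^sub>E B" "single A \<phi> = S" by (auto simp: X_def)
      have sing: "c' = c" if "c \<in> S" "c' \<in> A" "\<phi> c' = \<phi> c" for c c'
        using that \<phi>(2) by (auto simp: single_def)
      define \<psi> where "\<psi> = restrict \<phi> S"
      define g where "g = restrict \<phi> (A - S)"
      have "\<psi> \<in> I" using \<phi>(1) SA sing by (auto simp: I_def \<psi>_def inj_on_def)
      moreover have "g \<in> N \<psi>"
      proof -
        have "g \<in> (A - S) \<rightarrow>\<^sub>E (B - \<psi> ` S)"
        proof -
          have "\<phi> c \<notin> \<phi> ` S" if "c \<in> A - S" for c using that sing by force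
          then show ?thesis using \<phi>(1) by (auto simp: g_def \<psi>_def)
        qed
        moreover have "card {c\<in>A - S. g c = r} \<noteq> 1" if r: "r \<in> B - \<psi> ` S" for r
        proof
          assume "card {c\<in>A - S. g c = r} = 1"
          then obtain c0 where c0: "{c\<in>A - S. g c = r} = {c0}" by (auto simp: card_1_singleton_iff)
          then have c0A: "c0 \<in> A - S" "\<phi> c0 = r" by (auto simp: g_def)
          have "c' = c0" if "c' \<in> A" "\<phi> c' = \<phi> c0" for c'
          proof (cases "c' \<in> S")
            case True then have "r \<in> \<psi> ` S" using that c0A by (auto simp: \<psi>_def)
            then show ?thesis using r by auto
          next
            case False then have "c' \<in> {c\<in>A - S. g c = r}" using that c0A by (auto simp: g_def)
            then show ?thesis using c0 by auto
          qed
          then have "c0 \<in> single A \<phi>" using c0A by (auto simp: single_def)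
          then show False using \<phi>(2) c0A by auto
        qed
        ultimately show ?thesis by (simp add: N_def nosing_def)
      qed
      moreover have "\<phi> = merge S \<psi> g"
      proof
        fix c show "\<phi> c = merge S \<psi> g c"
          using \<phi>(1) SA by (auto simp: merge_def \<psi>_def g_def PiE_iff extensional_def)
      qed
      ultimately show "\<phi> \<in> M ` Sigma I N" unfolding M_def by force
    qed
  qed
  have "card X = card (Sigma I N)" using card_image[OF inj] img by simp
  also have "\<dots> = (\<Sum>\<psi>\<in>I. card (N \<psi>))" using fI fN by (simp add: card_SigmaI)
  also have "\<dots> = (\<Sum>\<psi>\<in>I. card (nosing (A - S) {0..<card B - card S}))" using cN by simp
  finally show ?thesis by (simp add: X_def I_def)
qed



definition sing :: "nat \<Rightarrow> (nat \<Rightarrow> nat \<Rightarrow> bool) \<Rightarrow> nat set" where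
  "sing n M = {c. \<exists>r<n. {c'. M r c'} = {c}}"

lemma sing_mat: "\<phi> \<in> {0..<m} \<rightarrow>\<^sub>E {0..<n} \<Longrightarrow> sing n (mat m \<phi>) = single {0..<m} \<phi>"
proof
  assume p: "\<phi> \<in> {0..<m} \<rightarrow>\<^sub>E {0..<n}"
  show "sing n (mat m \<phi>) \<subseteq> single {0..<m} \<phi>"
  proof
    fix c assume "c \<in> sing n (mat m \<phi>)"
    then obtain r where r: "r < n" "{c'. mat m \<phi> r c'} = {c}" unfolding sing_def by blast
    then have "mat m \<phi> r c" by blast
    then have cm: "c < m" "\<phi> c = r" by (simp_all add: mat_def)
    have U: "c' = c" if "c' \<in> {0..<m}" "\<phi> c' = \<phi> c" for c'
    proof -
      have "mat m \<phi> r c'" using that cm by (simp add: mat_def)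
      then show ?thesis using r(2) by blast
    qed
    have "c \<in> {0..<m}" using cm by simp
    then show "c \<in> single {0..<m} \<phi>" using U unfolding single_def by blast
  qed
  show "single {0..<m} \<phi> \<subseteq> sing n (mat m \<phi>)"
  proof
    fix c assume c: "c \<in> single {0..<m} \<phi>"
    then have cm: "c < m" and u: "\<And>c'. c' \<in> {0..<m} \<Longrightarrow> \<phi> c' = \<phi> c \<Longrightarrow> c' = c"
      unfolding single_def by auto
    have "\<phi> c < n" using p cm by auto
    moreover have "{c'. mat m \<phi> (\<phi> c) c'} = {c}"
    proof (intro equalityI subsetI)
      fix x assume "x \<in> {c'. mat m \<phi> (\<phi> c) c'}"
      then have "x < m" "\<phi> x = \<phi> c" by (simp_all add: mat_def)
      then show "x \<in> {c}" using u[of x] by simp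
    next
      fix x assume "x \<in> {c}" then show "x \<in> {c'. mat m \<phi> (\<phi> c) c'}" using cm by (simp add: mat_def)
    qed
    ultimately show "c \<in> sing n (mat m \<phi>)" unfolding sing_def by blast
  qed
qed

lemma sing_sub: "M \<in> S_mat n m \<Longrightarrow> sing n M \<subseteq> {0..<m}"
proof
  fix c assume M: "M \<in> S_mat n m" and "c \<in> sing n M"
  then obtain r where "{c'. M r c'} = {c}" by (auto simp: sing_def)
  then have "M r c" by blast
  then show "c \<in> {0..<m}" using M by (auto simp: S_mat_def)
qed

lemma card_sing_eq:
  assumes "S \<subseteq> {0..<f}"
  shows "card {M \<in> S_mat N f. sing N M = S} =
    (N choose card S) * fact (card S) * z_count (N - card S) (f - card S)"
proof -
  have "{\<phi> \<in> {0..<f} \<rightarrow>\<^sub>E {0..<N}. sing N (mat f \<phi>) = S} = {\<phi> \<in> {0..<f} \<rightarrow>\<^sub>E {0..<N}. single {0..<f} \<phi> = S}"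
    by (rule Collect_cong) (auto simp: sing_mat)
  then have "card {M \<in> S_mat N f. sing N M = S} = card {\<phi> \<in> {0..<f} \<rightarrow>\<^sub>E {0..<N}. single {0..<f} \<phi> = S}"
    by (simp add: card_S_mat_filter)
  also have "\<dots> = card {\<psi> \<in> S \<rightarrow>\<^sub>E {0..<N}. inj_on \<psi> S} * card (nosing ({0..<f} - S) {0..<N - card S})"
    using card_single[of "{0..<f}" "{0..<N}" S] assms by simp
  also have "card (nosing ({0..<f} - S) {0..<N - card S}) = card (nosing {0..<f - card S} {0..<N - card S})"
    using assms by (intro nosing_card_eq) (auto simp: card_Diff_subset finite_subset)
  also have "\<dots> = z_count (N - card S) (f - card S)" by (simp add: z_count_nosing)
  also have "card {\<psi> \<in> S \<rightarrow>\<^sub>E {0..<N}. inj_on \<psi> S} = (N choose card S) * fact (card S)"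
    using card_inj_funcset[of S "{0..<N}"] assms finite_subset by fastforce
  finally show ?thesis .
qed

definition ext0 :: "nat \<Rightarrow> (nat \<Rightarrow> nat \<Rightarrow> nat \<Rightarrow> bool) \<Rightarrow> nat \<Rightarrow> nat \<Rightarrow> nat \<Rightarrow> bool" where
  "ext0 h G = (\<lambda>i. if i < h then G i else (\<lambda>_ _. False))"

lemma states_prod:
  assumes A: "\<And>i. i < h \<Longrightarrow> A i \<subseteq> S_mat NH f"
  shows "card {F \<in> ibf_states h NH f. \<forall>i<h. F i \<in> A i} = (\<Prod>i<h. card (A i))"
proof -
  have inj: "inj_on (ext0 h) (PiE {..<h} A)"
  proof (rule inj_onI)
    fix G G' assume g: "G \<in> PiE {..<h} A" "G' \<in> PiE {..<h} A" "ext0 h G = ext0 h G'"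
    show "G = G'"
    proof (rule extensionalityI)
      show "G \<in> extensional {..<h}" "G' \<in> extensional {..<h}" using g by (auto simp: PiE_iff)
      fix i assume "i \<in> {..<h}" then show "G i = G' i" using fun_cong[OF g(3), of i] by (simp add: ext0_def)
    qed
  qed
  have img: "ext0 h ` PiE {..<h} A = {F \<in> ibf_states h NH f. \<forall>i<h. F i \<in> A i}"
  proof
    show "ext0 h ` PiE {..<h} A \<subseteq> {F \<in> ibf_states h NH f. \<forall>i<h. F i \<in> A i}"
      using A by (force simp: ext0_def ibf_states_def PiE_iff)
    show "{F \<in> ibf_states h NH f. \<forall>i<h. F i \<in> A i} \<subseteq> ext0 h ` PiE {..<h} A"
    proof
      fix F assume F: "F \<in> {F \<in> ibf_states h NH f. \<forall>i<h. F i \<in> A i}"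
      have "F = ext0 h (restrict F {..<h})"
        using F by (auto simp: ext0_def ibf_states_def)
      moreover have "restrict F {..<h} \<in> PiE {..<h} A" using F by auto
      ultimately show "F \<in> ext0 h ` PiE {..<h} A" by blast
    qed
  qed
  have "card {F \<in> ibf_states h NH f. \<forall>i<h. F i \<in> A i} = card (PiE {..<h} A)"
    using card_image[OF inj] img by simp
  also have "\<dots> = (\<Prod>i<h. card (A i))" by (simp add: card_PiE)
  finally show ?thesis .
qed

lemma states_finite: "finite (ibf_states h NH f)"
proof -
  have "ibf_states h NH f = ext0 h ` PiE {..<h} (\<lambda>_. S_mat NH f)"
  proof
    show "ext0 h ` PiE {..<h} (\<lambda>_. S_mat NH f) \<subseteq> ibf_states h NH f"
      by (force simp: ext0_def ibf_states_def PiE_iff)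
    show "ibf_states h NH f \<subseteq> ext0 h ` PiE {..<h} (\<lambda>_. S_mat NH f)"
    proof
      fix F assume F: "F \<in> ibf_states h NH f"
      have "F = ext0 h (restrict F {..<h})"
        using F by (auto simp: ext0_def ibf_states_def)
      moreover have "restrict F {..<h} \<in> PiE {..<h} (\<lambda>_. S_mat NH f)" using F by (auto simp: ibf_states_def)
      ultimately show "F \<in> ext0 h ` PiE {..<h} (\<lambda>_. S_mat NH f)" by blast
    qed
  qed
  then show ?thesis by (simp add: finite_PiE finite_S_mat)
qed

lemma states_card: "card (ibf_states h NH f) = NH ^ (h * f)"
proof -
  have "card {F \<in> ibf_states h NH f. \<forall>i<h. F i \<in> S_mat NH f} = (\<Prod>i<h. card (S_mat NH f))"
    by (rule states_prod) auto
  moreover have "{F \<in> ibf_states h NH f. \<forall>i<h. F i \<in> S_mat NH f} = ibf_states h NH f"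
    by (auto simp: ibf_states_def)
  ultimately show ?thesis by (simp add: card_S_mat power_mult mult.commute)
qed

lemma states_nonempty: "NH \<ge> 1 \<Longrightarrow> ibf_states h NH f \<noteq> {}"
proof -
  assume "NH \<ge> 1"
  then have "card (ibf_states h NH f) > 0" by (simp add: states_card)
  then show ?thesis by auto
qed



definition Cov :: "nat \<Rightarrow> 'a set \<Rightarrow> (nat \<Rightarrow> nat) \<Rightarrow> (nat \<Rightarrow> 'a set) set" where
  "Cov h E b = {S \<in> PiE {..<h} (\<lambda>_. Pow E). (\<Union>i<h. S i) = E \<and> (\<forall>i<h. card (S i) = b i)}"

definition cover :: "nat \<Rightarrow> 'a set \<Rightarrow> (nat \<Rightarrow> nat) \<Rightarrow> nat" where
  "cover h E b = card (Cov h E b)"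

lemma finite_Cov: "finite E \<Longrightarrow> finite (Cov h E b)"
  unfolding Cov_def by (rule finite_subset[of _ "PiE {..<h} (\<lambda>_. Pow E)"]) (auto intro!: finite_PiE)

lemma key_identity:
  assumes fE: "finite E"
  shows "(\<Prod>i<h. (card E choose b i)) = (\<Sum>U\<in>Pow E. cover h U b)"
proof -
  define P where "P = PiE {..<h} (\<lambda>i. {s. s \<subseteq> E \<and> card s = b i})"
  have "card P = (\<Prod>i<h. card {s. s \<subseteq> E \<and> card s = b i})" by (simp add: P_def card_PiE)
  also have "\<dots> = (\<Prod>i<h. (card E choose b i))" using n_subsets[OF fE] by simp
  finally have cP: "card P = (\<Prod>i<h. (card E choose b i))" .
  have PU: "P = (\<Union>U\<in>Pow E. Cov h U b)"
  proof (intro equalityI subsetI)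
    fix S assume S: "S \<in> P"
    define U where "U = (\<Union>i<h. S i)"
    have "U \<in> Pow E" using S by (auto simp: P_def U_def)
    moreover have "S \<in> Cov h U b" using S by (auto simp: P_def U_def Cov_def)
    ultimately show "S \<in> (\<Union>U\<in>Pow E. Cov h U b)" by blast
  next
    fix S assume "S \<in> (\<Union>U\<in>Pow E. Cov h U b)"
    then obtain U where "U \<subseteq> E" "S \<in> Cov h U b" by auto
    then show "S \<in> P" by (auto simp: P_def Cov_def)
  qed
  have "card P = (\<Sum>U\<in>Pow E. card (Cov h U b))"
    unfolding PU
  proof (rule card_UN_disjoint)
    show "finite (Pow E)" using fE by simp
    show "\<forall>U\<in>Pow E. finite (Cov h U b)" using fE by (auto intro: finite_Cov finite_subset)
    show "\<forall>U\<in>Pow E. \<forall>U'\<in>Pow E. U \<noteq> U' \<longrightarrow> Cov h U b \<inter> Cov h U' b = {}"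
      by (auto simp: Cov_def)
  qed
  then show ?thesis using cP by (simp add: cover_def)
qed

lemma group_card:
  assumes fE: "finite E"
  shows "(\<Sum>U\<in>Pow E - {E}. (g (card U) :: int)) = (\<Sum>j<card E. int (card E choose j) * g j)"
proof -
  have im: "card ` (Pow E - {E}) \<subseteq> {..<card E}"
    using fE by (auto intro!: psubset_card_mono)
  have "(\<Sum>U\<in>Pow E - {E}. g (card U)) = (\<Sum>j<card E. \<Sum>U\<in>{U. U \<in> Pow E - {E} \<and> card U = j}. g (card U))"
    using sum.group[OF _ _ im, of "\<lambda>U. g (card U)"] fE by simp
  also have "\<dots> = (\<Sum>j<card E. int (card E choose j) * g j)"
  proof (rule sum.cong[OF refl])
    fix j assume j: "j \<in> {..<card E}"
    have se: "{U. U \<in> Pow E - {E} \<and> card U = j} = {U. U \<subseteq> E \<and> card U = j}" using j by auto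
    have "(\<Sum>U\<in>{U. U \<in> Pow E - {E} \<and> card U = j}. g (card U)) = (\<Sum>U\<in>{U. U \<subseteq> E \<and> card U = j}. g j)"
      unfolding se by (rule sum.cong[OF refl]) simp
    also have "\<dots> = int (card E choose j) * g j" using n_subsets[OF fE, of j] by simp
    finally show "(\<Sum>U\<in>{U. U \<in> Pow E - {E} \<and> card U = j}. g (card U)) = int (card E choose j) * g j" .
  qed
  finally show ?thesis .
qed

lemma prod_choose0: "(\<Prod>i<(h::nat). int (0 choose b i)) = (if \<forall>i<h. b i = 0 then 1 else 0)"
proof (cases "\<forall>i<h. b i = 0")
  case True then show ?thesis by simp
next
  case False
  then obtain i where i: "i < h" "b i \<noteq> 0" by auto
  have "(\<Prod>i<h. int (0 choose b i)) = int (0 choose b i) * (\<Prod>i\<in>{..<h} - {i}. int (0 choose b i))"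
    using i by (intro prod.remove) auto
  then have "(\<Prod>i<h. int (0 choose b i)) = 0" using i by simp
  then show ?thesis using False by simp
qed

lemma Psi_cover: "finite E \<Longrightarrow> Psi h (card E) b = int (cover h E b)"
proof (induction "card E" arbitrary: E rule: less_induct)
  case (less E)
  have fE: "finite E" by fact
  have key: "(\<Prod>i<h. int (card E choose b i)) = (\<Sum>U\<in>Pow E. int (cover h U b))"
    using arg_cong[OF key_identity[OF fE, where h=h and b=b], of int] by simp
  have IH: "Psi h (card U) b = int (cover h U b)" if "U \<in> Pow E - {E}" for U
  proof -
    have "U \<subset> E" using that by auto
    have "card U < card E" using fE \<open>U \<subset> E\<close> by (rule psubset_card_mono)
    moreover have "finite U" using \<open>U \<subset> E\<close> fE finite_subset by auto
    ultimately show ?thesis using less.hyps by blast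
  qed
  have "(\<Sum>U\<in>Pow E. int (cover h U b)) = int (cover h E b) + (\<Sum>U\<in>Pow E - {E}. int (cover h U b))"
    using fE by (subst sum.remove[of _ E]) auto
  also have "(\<Sum>U\<in>Pow E - {E}. int (cover h U b)) = (\<Sum>U\<in>Pow E - {E}. Psi h (card U) b)"
    by (rule sum.cong[OF refl]) (rule IH[symmetric])
  also have "\<dots> = (\<Sum>j<card E. int (card E choose j) * Psi h j b)"
    using group_card[OF fE, where g="\<lambda>j. Psi h j b"] by simp
  finally have eq: "(\<Prod>i<h. int (card E choose b i)) = int (cover h E b) + (\<Sum>j<card E. int (card E choose j) * Psi h j b)"
    using key by (simp only:)
  show ?case
  proof (cases "card E = 0")
    case True
    have "Psi h 0 b = (if \<forall>i<h. b i = 0 then 1 else 0)" by (subst Psi.simps) simp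
    then have "(\<Prod>i<h. int (card E choose b i)) = Psi h (card E) b"
      using prod_choose0[where h=h and b=b] True by simp
    then show ?thesis using eq True by simp
  next
    case False
    then have "Psi h (card E) b = (\<Prod>i<h. int (card E choose b i)) - (\<Sum>j<card E. int (card E choose j) * Psi h j b)"
      using Psi.simps[of h "card E" b] by simp
    then show ?thesis using eq by simp
  qed
qed



definition Uset :: "nat \<Rightarrow> nat \<Rightarrow> (nat \<Rightarrow> nat \<Rightarrow> nat \<Rightarrow> bool) \<Rightarrow> nat set" where
  "Uset h NH F = (\<Union>i<h. sing NH (F i))"

definition Gc :: "nat \<Rightarrow> nat \<Rightarrow> nat \<Rightarrow> nat" where
  "Gc NH f k = (NH choose k) * fact k * z_count (NH - k) (f - k)"

definition Cov' :: "nat \<Rightarrow> nat set \<Rightarrow> (nat \<Rightarrow> nat set) set" where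
  "Cov' h E = {S \<in> PiE {..<h} (\<lambda>_. Pow E). (\<Union>i<h. S i) = E}"

lemma finite_Cov': "finite E \<Longrightarrow> finite (Cov' h E)"
  unfolding Cov'_def by (rule finite_subset[of _ "PiE {..<h} (\<lambda>_. Pow E)"]) (auto intro!: finite_PiE)

lemma Uset_sub: "F \<in> ibf_states h NH f \<Longrightarrow> Uset h NH F \<subseteq> {0..<f}"
  using sing_sub by (fastforce simp: Uset_def ibf_states_def)

lemma count_UE:
  assumes Ef: "E \<subseteq> {0..<f}"
  shows "card {F \<in> ibf_states h NH f. Uset h NH F = E} = (\<Sum>S\<in>Cov' h E. \<Prod>i<h. Gc NH f (card (S i)))"
proof -
  define Q where "Q = (\<lambda>S. {F \<in> ibf_states h NH f. \<forall>i<h. F i \<in> {M \<in> S_mat NH f. sing NH M = S i}})"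
  have fE: "finite E" using Ef finite_subset by blast
  have eq: "{F \<in> ibf_states h NH f. Uset h NH F = E} = (\<Union>S\<in>Cov' h E. Q S)"
  proof (intro equalityI subsetI)
    fix F assume F: "F \<in> {F \<in> ibf_states h NH f. Uset h NH F = E}"
    define S where "S = (\<lambda>i\<in>{..<h}. sing NH (F i))"
    have "(\<Union>i<h. S i) = Uset h NH F" by (simp add: S_def Uset_def)
    then have "S \<in> Cov' h E" using F by (auto simp: Cov'_def S_def Uset_def)
    moreover have "F \<in> Q S" using F by (auto simp: Q_def S_def ibf_states_def)
    ultimately show "F \<in> (\<Union>S\<in>Cov' h E. Q S)" by blast
  next
    fix F assume "F \<in> (\<Union>S\<in>Cov' h E. Q S)"
    then obtain S where S: "S \<in> Cov' h E" "F \<in> Q S" by blast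
    then have "Uset h NH F = (\<Union>i<h. S i)" by (auto simp: Q_def Uset_def)
    then show "F \<in> {F \<in> ibf_states h NH f. Uset h NH F = E}" using S by (auto simp: Q_def Cov'_def)
  qed
  have "card (\<Union>S\<in>Cov' h E. Q S) = (\<Sum>S\<in>Cov' h E. card (Q S))"
  proof (rule card_UN_disjoint)
    show "finite (Cov' h E)" using fE by (rule finite_Cov')
    show "\<forall>S\<in>Cov' h E. finite (Q S)" using states_finite by (auto simp: Q_def)
    show "\<forall>S\<in>Cov' h E. \<forall>S'\<in>Cov' h E. S \<noteq> S' \<longrightarrow> Q S \<inter> Q S' = {}"
    proof (intro ballI impI)
      fix S S' assume S: "S \<in> Cov' h E" "S' \<in> Cov' h E" "S \<noteq> S'"
      show "Q S \<inter> Q S' = {}"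
      proof (rule ccontr)
        assume "Q S \<inter> Q S' \<noteq> {}"
        then obtain F where "F \<in> Q S" "F \<in> Q S'" by blast
        then have "\<forall>i<h. S i = S' i" by (auto simp: Q_def)
        moreover have "S \<in> extensional {..<h}" "S' \<in> extensional {..<h}" using S by (auto simp: Cov'_def PiE_iff)
        ultimately have "S = S'" by (intro extensionalityI) auto
        then show False using S by simp
      qed
    qed
  qed
  also have "\<dots> = (\<Sum>S\<in>Cov' h E. \<Prod>i<h. Gc NH f (card (S i)))"
  proof (rule sum.cong[OF refl])
    fix S assume S: "S \<in> Cov' h E"
    have "card (Q S) = (\<Prod>i<h. card {M \<in> S_mat NH f. sing NH M = S i})"
      unfolding Q_def by (rule states_prod) auto
    also have "\<dots> = (\<Prod>i<h. Gc NH f (card (S i)))"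
    proof (rule prod.cong[OF refl])
      fix i assume "i \<in> {..<h}"
      then have "S i \<subseteq> {0..<f}" using S Ef by (auto simp: Cov'_def)
      then show "card {M \<in> S_mat NH f. sing NH M = S i} = Gc NH f (card (S i))"
        by (simp add: card_sing_eq Gc_def)
    qed
    finally show "card (Q S) = (\<Prod>i<h. Gc NH f (card (S i)))" .
  qed
  finally show ?thesis using eq by simp
qed

lemma finite_T_set: "finite (T_set h e)"
  by (simp add: T_set_def finite_PiE)

lemma regroup:
  assumes fE: "finite E"
  shows "(\<Sum>S\<in>Cov' h E. \<Prod>i<h. Gc NH f (card (S i))) =
         (\<Sum>b\<in>T_set h (card E). cover h E b * (\<Prod>i<h. Gc NH f (b i)))"
proof -
  define g where "g = (\<lambda>S::nat \<Rightarrow> nat set. \<lambda>i\<in>{..<h}. card (S i))"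
  have fC: "finite (Cov' h E)" using fE by (rule finite_Cov')
  have im: "g ` Cov' h E \<subseteq> T_set h (card E)"
  proof
    fix b assume "b \<in> g ` Cov' h E"
    then obtain S where S: "S \<in> Cov' h E" "b = g S" by blast
    have "card (S i) \<le> card E" if "i < h" for i using S that fE by (intro card_mono) (auto simp: Cov'_def)
    then show "b \<in> T_set h (card E)" using S by (auto simp: T_set_def g_def)
  qed
  have "(\<Sum>S\<in>Cov' h E. \<Prod>i<h. Gc NH f (card (S i))) =
        (\<Sum>b\<in>T_set h (card E). \<Sum>S\<in>{S. S \<in> Cov' h E \<and> g S = b}. \<Prod>i<h. Gc NH f (card (S i)))"
    using sum.group[OF fC finite_T_set im, of "\<lambda>S. \<Prod>i<h. Gc NH f (card (S i))"] by simp
  also have "\<dots> = (\<Sum>b\<in>T_set h (card E). cover h E b * (\<Prod>i<h. Gc NH f (b i)))"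
  proof (rule sum.cong[OF refl])
    fix b assume b: "b \<in> T_set h (card E)"
    then have bext: "b \<in> extensional {..<h}" by (auto simp: T_set_def PiE_iff)
    have se: "{S. S \<in> Cov' h E \<and> g S = b} = Cov h E b"
    proof (intro equalityI subsetI)
      fix S assume "S \<in> {S. S \<in> Cov' h E \<and> g S = b}"
      then show "S \<in> Cov h E b" by (auto simp: Cov'_def Cov_def g_def)
    next
      fix S assume S: "S \<in> Cov h E b"
      have "g S = b"
      proof (rule extensionalityI[OF _ bext])
        show "g S \<in> extensional {..<h}" by (simp add: g_def)
        fix i assume "i \<in> {..<h}" then show "g S i = b i" using S by (auto simp: g_def Cov_def)
      qed
      then show "S \<in> {S. S \<in> Cov' h E \<and> g S = b}" using S by (auto simp: Cov'_def Cov_def)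
    qed
    have "(\<Sum>S\<in>Cov h E b. \<Prod>i<h. Gc NH f (card (S i))) = (\<Sum>S\<in>Cov h E b. \<Prod>i<h. Gc NH f (b i))"
      by (rule sum.cong[OF refl]) (auto simp: Cov_def)
    then show "(\<Sum>S\<in>{S. S \<in> Cov' h E \<and> g S = b}. \<Prod>i<h. Gc NH f (card (S i))) = cover h E b * (\<Prod>i<h. Gc NH f (b i))"
      unfolding se by (simp add: cover_def)
  qed
  finally show ?thesis .
qed

definition KK :: "nat \<Rightarrow> nat \<Rightarrow> nat \<Rightarrow> nat \<Rightarrow> int" where
  "KK NH f h e = (\<Sum>b \<in> {b \<in> T_set h e. xi h b \<ge> e}.
        Psi h e b * (\<Prod>i<h. int ((NH choose b i) * fact (b i) * z_count (NH - b i) (f - b i))))"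

lemma Theta_KK: "Theta NH f h e = int (f choose e) * KK NH f h e"
  by (simp add: Theta_def KK_def)

lemma cover_zero: "finite E \<Longrightarrow> xi h b < card E \<Longrightarrow> cover h E b = 0"
proof -
  assume fE: "finite E" and x: "xi h b < card E"
  have "Cov h E b = {}"
  proof (rule ccontr)
    assume "Cov h E b \<noteq> {}"
    then obtain S where S: "S \<in> Cov h E b" by blast
    then have "card E = card (\<Union>i<h. S i)" by (auto simp: Cov_def)
    also have "\<dots> \<le> (\<Sum>i<h. card (S i))" by (rule card_UN_le) simp
    also have "\<dots> = xi h b" using S by (simp add: Cov_def xi_def)
    finally show False using x by simp
  qed
  then show ?thesis by (simp add: cover_def)
qed

lemma count_UE_KK:
  assumes Ef: "E \<subseteq> {0..<f}" and cE: "card E = e"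
  shows "int (card {F \<in> ibf_states h NH f. Uset h NH F = E}) = KK NH f h e"
proof -
  have fE: "finite E" using Ef finite_subset by blast
  have "int (card {F \<in> ibf_states h NH f. Uset h NH F = E}) =
        (\<Sum>b\<in>T_set h e. int (cover h E b) * (\<Prod>i<h. int (Gc NH f (b i))))"
    using count_UE[OF Ef, of h NH] regroup[OF fE, where h=h and NH=NH and f=f] cE by (simp add: of_nat_prod of_nat_sum)
  also have "\<dots> = (\<Sum>b\<in>T_set h e. Psi h e b * (\<Prod>i<h. int (Gc NH f (b i))))"
    using Psi_cover[OF fE] cE by simp
  also have "\<dots> = (\<Sum>b\<in>{b \<in> T_set h e. xi h b \<ge> e}. Psi h e b * (\<Prod>i<h. int (Gc NH f (b i))))"
  proof (rule sum.mono_neutral_right[OF finite_T_set])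
    show "{b \<in> T_set h e. e \<le> xi h b} \<subseteq> T_set h e" by auto
    show "\<forall>b\<in>T_set h e - {b \<in> T_set h e. e \<le> xi h b}. Psi h e b * (\<Prod>i<h. int (Gc NH f (b i))) = 0"
      using cover_zero[OF fE] Psi_cover[OF fE] cE by auto
  qed
  also have "\<dots> = KK NH f h e" by (simp add: KK_def Gc_def)
  finally show ?thesis .
qed

lemma count_X:
  "int (card {F \<in> ibf_states h NH f. card (Uset h NH F) = e}) = Theta NH f h e"
proof -
  define \<E> where "\<E> = {E. E \<subseteq> {0..<f} \<and> card E = e}"
  have eq: "{F \<in> ibf_states h NH f. card (Uset h NH F) = e} = (\<Union>E\<in>\<E>. {F \<in> ibf_states h NH f. Uset h NH F = E})"
    using Uset_sub by (auto simp: \<E>_def)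
  have "card (\<Union>E\<in>\<E>. {F \<in> ibf_states h NH f. Uset h NH F = E}) = (\<Sum>E\<in>\<E>. card {F \<in> ibf_states h NH f. Uset h NH F = E})"
    by (rule card_UN_disjoint) (auto simp: \<E>_def states_finite)
  then have "int (card {F \<in> ibf_states h NH f. card (Uset h NH F) = e}) = (\<Sum>E\<in>\<E>. int (card {F \<in> ibf_states h NH f. Uset h NH F = E}))"
    using eq by (simp add: of_nat_sum)
  also have "\<dots> = (\<Sum>E\<in>\<E>. KK NH f h e)"
    by (rule sum.cong[OF refl]) (auto simp: \<E>_def intro!: count_UE_KK)
  also have "\<dots> = int (f choose e) * KK NH f h e"
    using n_subsets[of "{0..<f}" e] by (simp add: \<E>_def)
  finally show ?thesis by (simp add: Theta_KK)
qed



lemma peel_exists: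
  "finite K \<Longrightarrow> \<exists>K'. (peel_step h NH F)\<^sup>*\<^sup>* K K' \<and> peel_terminal h NH F K'"
proof (induction "card K" arbitrary: K rule: less_induct)
  case (less K)
  show ?case
  proof (cases "peel_terminal h NH F K")
    case True then show ?thesis by blast
  next
    case False
    then obtain K1 where s: "peel_step h NH F K K1" by (auto simp: peel_terminal_def)
    then obtain i r c where "{c' \<in> K. F i r c'} = {c}" "K1 = K - {c}" by (auto simp: peel_step_def)
    then have "c \<in> K" "K1 = K - {c}" by auto
    then have lt: "card K1 < card K" using less.prems card_Diff1_less[of K c] by simp
    have fK1: "finite K1" using less.prems \<open>K1 = K - {c}\<close> by simp
    then obtain K' where "(peel_step h NH F)\<^sup>*\<^sup>* K1 K'" "peel_terminal h NH F K'"
      using less.hyps[OF lt fK1] by blast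
    then show ?thesis using s by (meson converse_rtranclp_into_rtranclp)
  qed
qed

lemma peel_final_props:
  "(peel_step h NH F)\<^sup>*\<^sup>* {0..<f} (peel_final h NH f F) \<and> peel_terminal h NH F (peel_final h NH f F)"
  unfolding peel_final_def using peel_exists[of "{0..<f}" h NH F] by (rule someI_ex) simp

lemma Uset_extracted:
  assumes F: "F \<in> ibf_states h NH f"
  shows "Uset h NH F \<subseteq> {0..<f} - peel_final h NH f F"
proof
  fix c assume "c \<in> Uset h NH F"
  then obtain i where i: "i < h" "c \<in> sing NH (F i)" by (auto simp: Uset_def)
  then obtain r where r: "r < NH" "{c'. F i r c'} = {c}" by (auto simp: sing_def)
  have "c \<in> {0..<f}" using Uset_sub[OF F] \<open>c \<in> Uset h NH F\<close> by blast
  moreover have "c \<notin> peel_final h NH f F"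
  proof
    assume c: "c \<in> peel_final h NH f F"
    define K where "K = peel_final h NH f F"
    have "{c' \<in> K. F i r c'} = {c}" using r c by (auto simp: K_def)
    then have "peel_step h NH F K (K - {c})" using i r by (auto simp: peel_step_def)
    then show False using peel_final_props[where h=h and NH=NH and f=f and F=F] by (auto simp: peel_terminal_def K_def)
  qed
  ultimately show "c \<in> {0..<f} - peel_final h NH f F" by blast
qed

lemma X_le_Y: assumes "F \<in> ibf_states h NH f" shows "card (Uset h NH F) \<le> extracted h NH f F"
  unfolding extracted_def using Uset_extracted[OF assms] by (intro card_mono) auto

theorem theorem2:
  fixes h NH f :: nat and R :: real
  assumes "h \<ge> 1" and "NH \<ge> 1" and "f \<ge> 1" and "0 < R" and "R \<le> 1"
  shows "measure_pmf.prob (pmf_of_set (ibf_states h NH f))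
           {F. real (extracted h NH f F) / real f < R}
         \<le> 1 - (\<Sum>e = nat \<lceil>R * real f\<rceil>..f. real_of_int (Theta NH f h e) / real NH ^ (h * f))"
proof -
  define St where "St = ibf_states h NH f"
  define y where "y = nat \<lceil>R * real f\<rceil>"
  define N where "N = card St"
  have fSt: "finite St" by (simp add: St_def states_finite)
  have neSt: "St \<noteq> {}" using assms(2) by (simp add: St_def states_nonempty)
  have NN: "real N = real NH ^ (h * f)" by (simp add: N_def St_def states_card)
  have Npos: "real N > 0" using fSt neSt by (simp add: N_def card_gt_0_iff)
  have fpos: "real f > 0" using assms(3) by simp
  have iff: "real Y / real f < R \<longleftrightarrow> \<not> y \<le> Y" for Y
  proof -
    have "real Y / real f < R \<longleftrightarrow> real Y < R * real f" using fpos by (simp add: divide_less_eq)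
    also have "\<dots> \<longleftrightarrow> int Y < \<lceil>R * real f\<rceil>" by (simp add: less_ceiling_iff)
    also have "\<dots> \<longleftrightarrow> Y < y" unfolding y_def using assms(4) fpos by linarith
    finally show ?thesis using not_le by blast
  qed
  define B where "B = {F \<in> St. y \<le> extracted h NH f F}"
  have "St \<inter> {F. real (extracted h NH f F) / real f < R} = St - B" using iff by (auto simp: B_def)
  then have P: "measure_pmf.prob (pmf_of_set St) {F. real (extracted h NH f F) / real f < R} = real (card (St - B)) / real N"
    using measure_pmf_of_set[OF neSt fSt] by (simp add: N_def)
  have Bsub: "B \<subseteq> St" by (auto simp: B_def)
  have c1: "card (St - B) = N - card B"
    using card_Diff_subset[OF finite_subset[OF Bsub fSt] Bsub] by (simp add: N_def)
  have c2: "card B \<le> N" using card_mono[OF fSt Bsub] by (simp add: N_def)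
  have cB: "real (card (St - B)) = real N - real (card B)"
    using c1 c2 by (simp add: of_nat_diff)
  define X where "X = (\<lambda>e. {F \<in> St. card (Uset h NH F) = e})"
  have "(\<Union>e\<in>{y..f}. X e) \<subseteq> B"
  proof
    fix F assume "F \<in> (\<Union>e\<in>{y..f}. X e)"
    then have "F \<in> St" "y \<le> card (Uset h NH F)" by (auto simp: X_def)
    then show "F \<in> B" using X_le_Y[of F h NH f] by (auto simp: B_def St_def)
  qed
  then have "card (\<Union>e\<in>{y..f}. X e) \<le> card B" using fSt by (intro card_mono) (auto simp: B_def)
  moreover have "card (\<Union>e\<in>{y..f}. X e) = (\<Sum>e\<in>{y..f}. card (X e))"
    using fSt by (intro card_UN_disjoint) (auto simp: X_def)
  ultimately have le: "(\<Sum>e\<in>{y..f}. real (card (X e))) \<le> real (card B)"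
    by (metis of_nat_le_iff of_nat_sum)
  have XT: "real (card (X e)) = real_of_int (Theta NH f h e)" for e
  proof -
    have "int (card (X e)) = Theta NH f h e" using count_X[of h NH f e] by (simp add: X_def St_def)
    then show ?thesis by (metis of_int_of_nat_eq)
  qed
  have "measure_pmf.prob (pmf_of_set St) {F. real (extracted h NH f F) / real f < R} = 1 - real (card B) / real N"
    using P cB Npos by (simp add: diff_divide_distrib)
  also have "\<dots> \<le> 1 - (\<Sum>e\<in>{y..f}. real (card (X e))) / real N"
    using le Npos by (simp add: divide_right_mono)
  also have "(\<Sum>e\<in>{y..f}. real (card (X e))) / real N = (\<Sum>e = y..f. real_of_int (Theta NH f h e) / real NH ^ (h * f))"
    using XT NN by (simp add: sum_divide_distrib)
  finally show ?thesis by (simp add: St_def y_def)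
qed

end
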